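(* Let $\mathbf A\in\mathbb C^{n\times n}$ with $\operatorname{Ind}\mathbf A=k$ and $\operatorname{rank}\mathbf A^{k+1}=\operatorname{rank}\mathbf A^{k}=r$, and let $\mathbf y\in\mathbb C^{n}$. Then the unique minimal $\mathbf P$-norm least squares solution $\hat{\mathbf x}=(\hat x_1,\dots,\hat x_n)^{T}$ of $\mathbf A\mathbf x=\mathbf y$ is given by \[ \hat x_i=\frac{\sum_{\beta\in J_{r,n}\{i\}}\left|\left(\mathbf A^{k+1}_{.i}(\mathbf f)\right)^{\beta}_{\beta}\right|}{\sum_{\beta\in J_{r,n}}\left|(\mathbf A^{k+1})^{\beta}_{\beta}\right|},\qquad i=1,\dots,n, \] where $\mathbf f=\mathbf A^{k}\mathbf y$.
   Context: $\operatorname{Ind}\mathbf A$ is the smallest nonnegative $k$ with $\operatorname{rank}\mathbf A^{k+1}=\operatorname{rank}\mathbf A^{k}$. Write $\mathbf A=\mathbf P\begin{pmatrix}\mathbf C&\mathbf 0\\ \mathbf 0&\mathbf N\end{pmatrix}\mathbf P^{-1}$ with $\mathbf C$ nonsingular and $\mathbf N$ nilpotent (Jordan canonical form); the $\mathbf P$-norm is $\|\mathbf x\|_{\mathbf P}=\|\mathbf P^{-1}\mathbf x\|$. It is known that the unique minimal $\mathbf P$-norm least squares solution of $\mathbf A\mathbf x=\mathbf y$ is $\mathbf A^{D}\mathbf y$, where $\mathbf A^{D}$ is the Drazin inverse (the unique $\mathbf X$ with $\mathbf A^{k+1}\mathbf X=\mathbf A^{k}$, $\mathbf X\mathbf A\mathbf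 X=\mathbf X$, $\mathbf A\mathbf X=\mathbf X\mathbf A$). $\mathbf M_{.i}(\mathbf c)$ denotes $\mathbf M$ with its $i$-th column replaced by $\mathbf c$. $J_{r,n}$ is the set of strictly increasing sequences of $r$ elements of $\{1,\dots,n\}$, $J_{r,n}\{i\}=\{\beta\in J_{r,n}:i\in\beta\}$, $\mathbf M^{\beta}_{\beta}$ is the principal submatrix indexed by $\beta$, $|\cdot|$ is the determinant. *)

theory Defs
  imports "Jordan_Normal_Form.DL_Rank_Submatrix"
begin

definition mrank :: "complex mat \<Rightarrow> nat" where
  "mrank A = vec_space.rank (dim_row A) A"

definition mat_ind :: "complex mat \<Rightarrow> nat" where
  "mat_ind A = (LEAST k. mrank (A ^\<^sub>m (k+1)) = mrank (A ^\<^sub>m k))"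

definition is_drazin_inverse :: "nat \<Rightarrow> complex mat \<Rightarrow> complex mat \<Rightarrow> bool" where
  "is_drazin_inverse n A X \<longleftrightarrow> X \<in> carrier_mat n n \<and>
     A ^\<^sub>m (mat_ind A + 1) * X = A ^\<^sub>m (mat_ind A) \<and> X * A * X = X \<and> A * X = X * A"

definition replace_col :: "'a mat \<Rightarrow> nat \<Rightarrow> 'a vec \<Rightarrow> 'a mat" where
  "replace_col M i c = mat (dim_row M) (dim_col M) (\<lambda>(a,b). if b = i then c $ a else M $$ (a,b))"

text \<open>J_{r,n}: r-element subsets of {0..<n} (strictly increasing index sequences).\<close>
definition Jrn :: "nat \<Rightarrow> nat \<Rightarrow> nat set set" where
  "Jrn r n = {\<beta>. \<beta> \<subseteq> {0..<n} \<and> card \<beta> = r}"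

end

theory Submission
  imports Defs
begin


lemma bij_pick:
  assumes "finite S" shows "bij_betw (pick S) {0..<card S} S"
proof -
  have inj: "inj_on (pick S) {0..<card S}"
    unfolding inj_on_def by (metis atLeastLessThan_iff linorder_neqE_nat pick_mono less_irrefl)
  have sub: "pick S ` {0..<card S} \<subseteq> S" using pick_in_set by auto
  have "card (pick S ` {0..<card S}) = card S" using card_image[OF inj] by simp
  hence "pick S ` {0..<card S} = S" using card_subset_eq[OF assms sub] by simp
  thus ?thesis using inj by (simp add: bij_betw_def)
qed

lemma det_sub_perm:
  fixes M :: "'a :: comm_ring_1 mat"
  assumes M: "M \<in> carrier_mat n n" and S: "S \<subseteq> {0..<n}"
  shows "det (submatrix M S S) = (\<Sum>p | p permutes S. signof p * (\<Prod>i\<in>S. M $$ (i, p i)))"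
proof -
  let ?m = "card S"
  have fin: "finite S" using S finite_subset by blast
  have dM: "dim_row M = n" "dim_col M = n" using M by auto
  have cS0: "{i. i < n \<and> i \<in> S} = S" using S by auto
  have cS: "{i. i < dim_row M \<and> i \<in> S} = S" "{i. i < dim_col M \<and> i \<in> S} = S" unfolding dM cS0 by auto
  have d1: "dim_row (submatrix M S S) = ?m" unfolding dim_submatrix(1) cS by (rule refl)
  have d2: "dim_col (submatrix M S S) = ?m" unfolding dim_submatrix(2) cS by (rule refl)
  have sub: "submatrix M S S \<in> carrier_mat ?m ?m" using d1 d2 by (rule carrier_matI)
  have ent: "submatrix M S S $$ (a,b) = M $$ (pick S a, pick S b)" if "a < ?m" "b < ?m" for a b
    by (rule submatrix_index) (simp_all only: cS that)
  have bij: "bij_betw (pick S) {0..<?m} S" by (rule bij_pick[OF fin])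
  have inj: "inj_on (pick S) {0..<?m}" using bij bij_betw_def by blast
  define \<Phi> where "\<Phi> = (\<lambda>\<pi> x. if x \<in> S then pick S (\<pi> (inv_into {0..<?m} (pick S) x)) else x)"
  have bij\<Phi>: "bij_betw \<Phi> {\<pi>. \<pi> permutes {0..<?m}} {\<pi>. \<pi> permutes S}"
    unfolding \<Phi>_def by (rule bij_betw_permutations[OF bij])
  have "det (submatrix M S S) = (\<Sum>q | q permutes {0..<?m}. signof q * (\<Prod>a=0..<?m. M $$ (pick S a, pick S (q a))))"
    unfolding det_def'[OF sub]
  proof (rule sum.cong[OF refl])
    fix q assume "q \<in> {q. q permutes {0..<?m}}"
    hence q: "q permutes {0..<?m}" by simp
    show "signof q * (\<Prod>i = 0..<?m. submatrix M S S $$ (i, q i)) =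
          signof q * (\<Prod>a = 0..<?m. M $$ (pick S a, pick S (q a)))"
      using ent permutes_in_image[OF q] by (intro arg_cong[where f="\<lambda>x. signof q * x"] prod.cong) auto
  qed
  also have "\<dots> = (\<Sum>q | q permutes {0..<?m}. signof (\<Phi> q) * (\<Prod>i\<in>S. M $$ (i, \<Phi> q i)))"
  proof (rule sum.cong[OF refl])
    fix q assume "q \<in> {q. q permutes {0..<?m}}"
    hence q: "q permutes {0..<?m}" by simp
    have "\<Phi> q = map_permutation {0..<?m} (pick S) q"
      unfolding \<Phi>_def map_permutation_def restrict_id_def using bij_betw_imp_surj_on[OF bij] by auto
    hence sg: "sign (\<Phi> q) = sign q" using sign_map_permutation[OF inj q] by simp
    have "(\<Prod>i\<in>S. M $$ (i, \<Phi> q i)) = (\<Prod>a\<in>{0..<?m}. M $$ (pick S a, \<Phi> q (pick S a)))"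
      using prod.reindex_bij_betw[OF bij, symmetric] by blast
    also have "\<dots> = (\<Prod>a\<in>{0..<?m}. M $$ (pick S a, pick S (q a)))"
    proof (rule prod.cong[OF refl])
      fix a assume a: "a \<in> {0..<?m}"
      have "pick S a \<in> S" using bij a bij_betwE by blast
      thus "M $$ (pick S a, \<Phi> q (pick S a)) = M $$ (pick S a, pick S (q a))"
        unfolding \<Phi>_def using inv_into_f_f[OF inj a] by simp
    qed
    finally show "signof q * (\<Prod>a = 0..<?m. M $$ (pick S a, pick S (q a))) =
        signof (\<Phi> q) * (\<Prod>i\<in>S. M $$ (i, \<Phi> q i))" using sg by (simp add: atLeast0LessThan)
  qed
  also have "\<dots> = (\<Sum>p | p permutes S. signof p * (\<Prod>i\<in>S. M $$ (i, p i)))"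
    by (rule sum.reindex_bij_betw[OF bij\<Phi>])
  finally show ?thesis .
qed

lemma perm_fix_eq:
  assumes "X \<subseteq> A"
  shows "{p. p permutes A \<and> (\<forall>i\<in>A-X. p i = i)} = {p. p permutes X}"
proof (intro equalityI subsetI)
  fix p assume "p \<in> {p. p permutes A \<and> (\<forall>i\<in>A-X. p i = i)}"
  hence p: "p permutes A" "\<forall>i\<in>A-X. p i = i" by auto
  have "\<forall>x. x \<notin> X \<longrightarrow> p x = x" using p permutes_not_in by (metis Diff_iff)
  moreover have "\<forall>y. \<exists>!x. p x = y" using p(1) unfolding permutes_def by blast
  ultimately show "p \<in> {p. p permutes X}" unfolding permutes_def by blast
next
  fix p assume "p \<in> {p. p permutes X}"
  hence p: "p permutes X" by simp
  show "p \<in> {p. p permutes A \<and> (\<forall>i\<in>A-X. p i = i)}"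
    using permutes_subset[OF p assms] permutes_not_in[OF p] by auto
qed

lemma prod_diag_part:
  fixes x :: "'a :: comm_ring_1"
  assumes "finite B"
  shows "(\<Prod>i\<in>B. if p i = i then x else 0) = (if \<forall>i\<in>B. p i = i then x ^ card B else 0)"
proof (cases "\<forall>i\<in>B. p i = i")
  case True
  hence "(\<Prod>i\<in>B. if p i = i then x else 0) = (\<Prod>i\<in>B. x)" by (intro prod.cong) auto
  then show ?thesis using True by simp
next
  case False
  then obtain j where "j \<in> B" "p j \<noteq> j" by auto
  hence "(\<Prod>i\<in>B. if p i = i then x else 0) = 0" using assms by (intro prod_zero) auto
  then show ?thesis by (simp only: if_not_P[OF False])
qed

lemma pme:
  fixes M :: "'a :: comm_ring_1 mat"
  assumes M: "M \<in> carrier_mat n n"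
  shows "det (x \<cdot>\<^sub>m 1\<^sub>m n + M) = (\<Sum>S\<in>Pow {0..<n}. x ^ (n - card S) * det (submatrix M S S))"
proof -
  let ?A = "{0..<n}"
  let ?P = "{p. p permutes ?A}"
  have C: "x \<cdot>\<^sub>m 1\<^sub>m n + M \<in> carrier_mat n n" using M by simp
  have "det (x \<cdot>\<^sub>m 1\<^sub>m n + M) = (\<Sum>p\<in>?P. signof p * (\<Prod>i\<in>?A. M $$ (i, p i) + (if p i = i then x else 0)))"
    unfolding det_def'[OF C]
  proof (rule sum.cong[OF refl])
    fix p assume "p \<in> ?P"
    hence p: "p permutes ?A" by simp
    have "(x \<cdot>\<^sub>m 1\<^sub>m n + M) $$ (i, p i) = M $$ (i, p i) + (if p i = i then x else 0)" if "i \<in> ?A" for i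
    proof -
      have "i < n" "p i < n" using that permutes_in_image[OF p] by auto
      thus ?thesis using M by (auto simp: add.commute)
    qed
    thus "signof p * (\<Prod>i = 0..<n. (x \<cdot>\<^sub>m 1\<^sub>m n + M) $$ (i, p i)) =
          signof p * (\<Prod>i\<in>?A. M $$ (i, p i) + (if p i = i then x else 0))" by simp
  qed
  also have "\<dots> = (\<Sum>p\<in>?P. \<Sum>X\<in>Pow ?A. signof p * ((\<Prod>i\<in>X. M $$ (i, p i)) *
       (if \<forall>i\<in>?A-X. p i = i then x ^ card (?A - X) else 0)))"
    by (simp add: prod_add prod_diag_part sum_distrib_left)
  also have "\<dots> = (\<Sum>X\<in>Pow ?A. \<Sum>p\<in>?P. signof p * ((\<Prod>i\<in>X. M $$ (i, p i)) *
       (if \<forall>i\<in>?A-X. p i = i then x ^ card (?A - X) else 0)))"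
    by (rule sum.swap)
  also have "\<dots> = (\<Sum>X\<in>Pow ?A. x ^ (n - card X) * det (submatrix M X X))"
  proof (rule sum.cong[OF refl])
    fix X assume "X \<in> Pow ?A"
    hence X: "X \<subseteq> ?A" by simp
    have fin: "finite ?P" by (rule finite_permutations) simp
    have cX: "card (?A - X) = n - card X" using X by (simp add: card_Diff_subset finite_subset)
    have "(\<Sum>p\<in>?P. signof p * ((\<Prod>i\<in>X. M $$ (i, p i)) *
       (if \<forall>i\<in>?A-X. p i = i then x ^ card (?A - X) else 0)))
      = (\<Sum>p\<in>?P. if \<forall>i\<in>?A-X. p i = i then x ^ (n - card X) * (signof p * (\<Prod>i\<in>X. M $$ (i, p i))) else 0)"
      by (intro sum.cong) (auto simp: cX)
    also have "\<dots> = (\<Sum>p\<in>{p\<in>?P. \<forall>i\<in>?A-X. p i = i}. x ^ (n - card X) * (signof p * (\<Prod>i\<in>X. M $$ (i, p i))))"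
      by (rule sum.inter_filter[OF fin, symmetric])
    also have "{p\<in>?P. \<forall>i\<in>?A-X. p i = i} = {p. p permutes X}"
      using perm_fix_eq[OF X] by simp
    also have "(\<Sum>p\<in>{p. p permutes X}. x ^ (n - card X) * (signof p * (\<Prod>i\<in>X. M $$ (i, p i))))
       = x ^ (n - card X) * det (submatrix M X X)"
      unfolding det_sub_perm[OF M X] by (simp add: sum_distrib_left)
    finally show "(\<Sum>p\<in>?P. signof p * ((\<Prod>i\<in>X. M $$ (i, p i)) *
       (if \<forall>i\<in>?A-X. p i = i then x ^ card (?A - X) else 0))) = x ^ (n - card X) * det (submatrix M X X)" .
  qed
  finally show ?thesis .
qed



lemma sylvester:
  fixes U V :: "'a :: idom mat"
  assumes U: "U \<in> carrier_mat n r" and V: "V \<in> carrier_mat r n"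
  shows "x ^ r * det (x \<cdot>\<^sub>m 1\<^sub>m n + U * V) = x ^ n * det (x \<cdot>\<^sub>m 1\<^sub>m r + V * U)"
proof -
  define K where "K = four_block_mat (x \<cdot>\<^sub>m 1\<^sub>m n) (- U) V (1\<^sub>m r)"
  define L1 where "L1 = four_block_mat (1\<^sub>m n) (0\<^sub>m n r) (- V) (1\<^sub>m r)"
  define L2 where "L2 = four_block_mat (1\<^sub>m n) (0\<^sub>m n r) (- V) (x \<cdot>\<^sub>m 1\<^sub>m r)"
  have UV: "U * V \<in> carrier_mat n n" using U V by simp
  have VU: "V * U \<in> carrier_mat r r" using U V by simp
  have "K * L1 = four_block_mat (x \<cdot>\<^sub>m 1\<^sub>m n * 1\<^sub>m n + - U * - V) (x \<cdot>\<^sub>m 1\<^sub>m n * 0\<^sub>m n r + - U * 1\<^sub>m r)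
       (V * 1\<^sub>m n + 1\<^sub>m r * - V) (V * 0\<^sub>m n r + 1\<^sub>m r * 1\<^sub>m r)"
    unfolding K_def L1_def by (rule mult_four_block_mat) (use U V in auto)
  also have "\<dots> = four_block_mat (x \<cdot>\<^sub>m 1\<^sub>m n + U * V) (- U) (0\<^sub>m r n) (1\<^sub>m r)"
  proof (rule cong_four_block_mat)
    show "x \<cdot>\<^sub>m 1\<^sub>m n * 1\<^sub>m n + - U * - V = x \<cdot>\<^sub>m 1\<^sub>m n + U * V" using U V by simp
    show "x \<cdot>\<^sub>m 1\<^sub>m n * 0\<^sub>m n r + - U * 1\<^sub>m r = - U" using U by (intro eq_matI) auto
    show "V * 1\<^sub>m n + 1\<^sub>m r * - V = 0\<^sub>m r n" using V by (intro eq_matI) auto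
    show "V * 0\<^sub>m n r + 1\<^sub>m r * 1\<^sub>m r = 1\<^sub>m r" using V by (intro eq_matI) auto
  qed
  finally have KL1: "K * L1 = four_block_mat (x \<cdot>\<^sub>m 1\<^sub>m n + U * V) (- U) (0\<^sub>m r n) (1\<^sub>m r)" .
  have "L2 * K = four_block_mat (1\<^sub>m n * (x \<cdot>\<^sub>m 1\<^sub>m n) + 0\<^sub>m n r * V) (1\<^sub>m n * - U + 0\<^sub>m n r * 1\<^sub>m r)
       (- V * (x \<cdot>\<^sub>m 1\<^sub>m n) + x \<cdot>\<^sub>m 1\<^sub>m r * V) (- V * - U + x \<cdot>\<^sub>m 1\<^sub>m r * 1\<^sub>m r)"
    unfolding K_def L2_def by (rule mult_four_block_mat) (use U V in auto)
  also have "\<dots> = four_block_mat (x \<cdot>\<^sub>m 1\<^sub>m n) (- U) (0\<^sub>m r n) (x \<cdot>\<^sub>m 1\<^sub>m r + V * U)"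
  proof (rule cong_four_block_mat)
    show "1\<^sub>m n * (x \<cdot>\<^sub>m 1\<^sub>m n) + 0\<^sub>m n r * V = x \<cdot>\<^sub>m 1\<^sub>m n" using V by (intro eq_matI) auto
    show "1\<^sub>m n * - U + 0\<^sub>m n r * 1\<^sub>m r = - U" using U by (intro eq_matI) auto
    show "- V * (x \<cdot>\<^sub>m 1\<^sub>m n) + x \<cdot>\<^sub>m 1\<^sub>m r * V = 0\<^sub>m r n" using V by (intro eq_matI) auto
    show "- V * - U + x \<cdot>\<^sub>m 1\<^sub>m r * 1\<^sub>m r = x \<cdot>\<^sub>m 1\<^sub>m r + V * U" using U V VU
      by (intro eq_matI) (auto simp: add.commute)
  qed
  finally have L2K: "L2 * K = four_block_mat (x \<cdot>\<^sub>m 1\<^sub>m n) (- U) (0\<^sub>m r n) (x \<cdot>\<^sub>m 1\<^sub>m r + V * U)" .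
  have Kc: "K \<in> carrier_mat (n + r) (n + r)" unfolding K_def using U V by auto
  have L1c: "L1 \<in> carrier_mat (n + r) (n + r)" unfolding L1_def using U V by auto
  have L2c: "L2 \<in> carrier_mat (n + r) (n + r)" unfolding L2_def using U V by auto
  have dL1: "det L1 = 1" unfolding L1_def
    by (subst det_four_block_mat_upper_right_zero[of _ n _ r]) (use V in auto)
  have dL2: "det L2 = x ^ r" unfolding L2_def
    by (subst det_four_block_mat_upper_right_zero[of _ n _ r]) (use V in auto)
  have "det K = det (x \<cdot>\<^sub>m 1\<^sub>m n + U * V)"
  proof -
    have "det K = det (K * L1)" using det_mult[OF Kc L1c] dL1 by simp
    also have "\<dots> = det (x \<cdot>\<^sub>m 1\<^sub>m n + U * V) * det (1\<^sub>m r)" unfolding KL1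
      by (rule det_four_block_mat_lower_left_zero) (use U V in auto)
    finally show ?thesis by simp
  qed
  moreover have "x ^ r * det K = x ^ n * det (x \<cdot>\<^sub>m 1\<^sub>m r + V * U)"
  proof -
    have "x ^ r * det K = det (L2 * K)" using det_mult[OF L2c Kc] dL2 by simp
    also have "\<dots> = det (x \<cdot>\<^sub>m 1\<^sub>m n) * det (x \<cdot>\<^sub>m 1\<^sub>m r + V * U)" unfolding L2K
      by (rule det_four_block_mat_lower_left_zero) (use U V in auto)
    finally show ?thesis by simp
  qed
  ultimately show ?thesis by simp
qed



definition esum :: "nat \<Rightarrow> nat \<Rightarrow> 'a :: comm_ring_1 mat \<Rightarrow> 'a" where
  "esum k n M = (\<Sum>\<beta>\<in>Jrn k n. det (submatrix M \<beta> \<beta>))"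

lemma Jrn_finite: "finite (Jrn k n)"
  unfolding Jrn_def by (rule finite_subset[of _ "Pow {0..<n}"]) auto

lemma pme_grouped:
  fixes M :: "'a :: comm_ring_1 mat"
  assumes M: "M \<in> carrier_mat n n"
  shows "det (x \<cdot>\<^sub>m 1\<^sub>m n + M) = (\<Sum>k\<le>n. esum k n M * x ^ (n - k))"
proof -
  have P: "Pow {0..<n} = (\<Union>k\<in>{..n}. Jrn k n)"
  proof (intro equalityI subsetI)
    fix S assume "S \<in> Pow {0..<n}"
    hence "S \<subseteq> {0..<n}" by simp
    moreover hence "card S \<le> n" using card_mono[of "{0..<n}" S] by simp
    ultimately show "S \<in> (\<Union>k\<in>{..n}. Jrn k n)" unfolding Jrn_def by auto
  qed (auto simp: Jrn_def)
  have "det (x \<cdot>\<^sub>m 1\<^sub>m n + M) = (\<Sum>S\<in>(\<Union>k\<in>{..n}. Jrn k n). x ^ (n - card S) * det (submatrix M S S))"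
    unfolding pme[OF M] P ..
  also have "\<dots> = (\<Sum>k\<le>n. \<Sum>S\<in>Jrn k n. x ^ (n - card S) * det (submatrix M S S))"
    by (rule sum.UNION_disjoint) (auto simp: Jrn_finite Jrn_def)
  also have "\<dots> = (\<Sum>k\<le>n. esum k n M * x ^ (n - k))"
    unfolding esum_def sum_distrib_right
    by (intro sum.cong refl) (auto simp: Jrn_def mult.commute)
  finally show ?thesis .
qed

lemma submatrix_full:
  assumes C: "C \<in> carrier_mat r r"
  shows "submatrix C {0..<r} {0..<r} = C"
proof -
  have cs: "{i. i < r \<and> i \<in> {0..<r}} = {0..<r}" by auto
  have pk: "pick {0..<r} i = i" if "i < r" for i
  proof -
    have "i < card {a. a < r \<and> a \<in> (UNIV :: nat set)}" using that by simp
    from pick_reduce_set[OF this] have "pick UNIV i = pick {a. a < r \<and> a \<in> (UNIV :: nat set)} i" .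
    moreover have "{a. a < r \<and> a \<in> (UNIV :: nat set)} = {0..<r}" by auto
    ultimately show ?thesis using pick_UNIV by simp
  qed
  show ?thesis
    by (rule eq_matI) (use C cs pk in \<open>auto simp: submatrix_def\<close>)
qed

lemma Jrn_full: "Jrn r r = {{0..<r}}"
  unfolding Jrn_def
proof (intro equalityI subsetI)
  fix S assume "S \<in> {\<beta>. \<beta> \<subseteq> {0..<r} \<and> card \<beta> = r}"
  hence "S \<subseteq> {0..<r}" "card S = card {0..<r}" by auto
  hence "S = {0..<r}" using card_subset_eq by blast
  thus "S \<in> {{0..<r}}" by simp
qed auto

lemma esum_full: assumes "C \<in> carrier_mat r r" shows "esum r r C = det C"
  unfolding esum_def Jrn_full using submatrix_full[OF assms] by simp

lemma esum_factor:
  fixes U V :: "complex mat"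
  assumes U: "U \<in> carrier_mat n r" and V: "V \<in> carrier_mat r n" and rn: "r \<le> n"
  shows "esum r n (U * V) = det (V * U)"
proof -
  have UV: "U * V \<in> carrier_mat n n" and VU: "V * U \<in> carrier_mat r r" using U V by auto
  define P where "P = (\<Sum>k\<le>n. monom (esum k n (U * V)) (n - k + r))"
  define Q where "Q = (\<Sum>k\<le>r. monom (esum k r (V * U)) (n + (r - k)))"
  have "poly P x = poly Q x" for x
  proof -
    have "poly P x = x ^ r * det (x \<cdot>\<^sub>m 1\<^sub>m n + U * V)"
      unfolding P_def pme_grouped[OF UV] poly_sum poly_monom sum_distrib_left
      by (intro sum.cong refl) (simp only: power_add mult_ac)
    also have "\<dots> = x ^ n * det (x \<cdot>\<^sub>m 1\<^sub>m r + V * U)" by (rule sylvester[OF U V])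
    also have "\<dots> = poly Q x"
      unfolding Q_def pme_grouped[OF VU] poly_sum poly_monom sum_distrib_left
      by (intro sum.cong refl) (simp only: power_add mult_ac)
    finally show ?thesis .
  qed
  hence "P = Q" using poly_eq_poly_eq_iff by blast
  hence "coeff P n = coeff Q n" by simp
  moreover have "coeff P n = esum r n (U * V)"
  proof -
    have "coeff P n = (\<Sum>k\<le>n. if k = r then esum k n (U * V) else 0)"
      unfolding P_def coeff_sum coeff_monom by (intro sum.cong refl) auto
    also have "\<dots> = esum r n (U * V)" using rn by (simp add: sum.delta)
    finally show ?thesis .
  qed
  moreover have "coeff Q n = esum r r (V * U)"
  proof -
    have "coeff Q n = (\<Sum>k\<le>r. if k = r then esum k r (V * U) else 0)"
      unfolding Q_def coeff_sum coeff_monom by (intro sum.cong refl) auto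
    also have "\<dots> = esum r r (V * U)" by (simp add: sum.delta)
    finally show ?thesis .
  qed
  ultimately show ?thesis using esum_full[OF VU] by simp
qed



lemma mat_unit_col:
  fixes A :: "'a :: semiring_1 mat"
  assumes A: "A \<in> carrier_mat nr nc" and j: "j < nc"
  shows "A *\<^sub>v unit_vec nc j = col A j"
  by (rule eq_vecI) (use A j in auto)

lemma full_rank_factor:
  fixes B :: "complex mat"
  assumes B: "B \<in> carrier_mat n n" and rk: "vec_space.rank n B = r"
  obtains U V W where "U \<in> carrier_mat n r" "V \<in> carrier_mat r n" "B = U * V"
    "W \<in> carrier_mat n r" "U = B * W"
    "\<And>z. z \<in> carrier_vec r \<Longrightarrow> U *\<^sub>v z = 0\<^sub>v n \<Longrightarrow> z = 0\<^sub>v r"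
proof -
  interpret vec_space "TYPE(complex)" n .
  obtain S where max: "maximal S (\<lambda>T. T \<subseteq> set (cols B) \<and> lin_indpt T)"
    using maximal_exists[of "(\<lambda>T. T \<subseteq> set (cols B) \<and> lin_indpt T)" "card (set (cols B))" "{}"]
    by (meson List.finite_set card_mono empty_iff empty_subsetI finite_lin_indpt2 rev_finite_subset)
  have cardS: "card S = r" using rank_card_indpt[OF B max] rk by simp
  have SB: "S \<subseteq> set (cols B)" and li: "lin_indpt S" using max unfolding maximal_def by auto
  have finS: "finite S" using SB finite_subset by blast
  have colsB: "set (cols B) \<subseteq> carrier_vec n" using B cols_dim by blast
  obtain xs where xs: "set xs = S" "distinct xs" using finite_distinct_list[OF finS] by blast
  have lxs: "length xs = r" using distinct_card[OF xs(2)] xs(1) cardS by simp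
  have xsc: "set xs \<subseteq> carrier_vec n" using xs SB colsB by auto
  define U where "U = mat_of_cols n xs"
  have Uc: "U \<in> carrier_mat n r" unfolding U_def using lxs by (metis mat_of_cols_carrier(1))
  have colsU: "cols U = xs" unfolding U_def using xsc by simp
  have inj: "z = 0\<^sub>v r" if z: "z \<in> carrier_vec r" "U *\<^sub>v z = 0\<^sub>v n" for z
  proof (rule ccontr)
    assume "z \<noteq> 0\<^sub>v r"
    hence "lin_dep (set (cols U))" using lin_depI[OF Uc z(1) _ z(2)] colsU xs(2) by auto
    thus False using li colsU xs(1) by simp
  qed
  have span: "\<exists>w \<in> carrier_vec r. c = U *\<^sub>v w" if c: "c \<in> set (cols B)" for c
  proof -
    have cc: "c \<in> carrier_vec n" using c colsB by auto
    have SC: "S \<subseteq> carrier_vec n" using SB colsB by auto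
    have "c \<in> span S"
    proof (cases "c \<in> S")
      case True then show ?thesis using in_own_span[of S] SC by auto
    next
      case False
      have "\<not> lin_indpt (S \<union> {c})"
      proof
        assume "lin_indpt (S \<union> {c})"
        moreover have "S \<union> {c} \<subseteq> set (cols B)" using SB c by auto
        ultimately have "S \<union> {c} = S" using max unfolding maximal_def by blast
        thus False using False by auto
      qed
      thus ?thesis using lin_dep_iff_in_span[OF SC li cc False] by simp
    qed
    then obtain a where a: "lincomb a S = c" using finite_in_span[OF finS SC] by auto
    have "U *\<^sub>v vec r (\<lambda>i. a (col U i)) = lincomb a (set (cols U))"
      using mat_mult_eq_lincomb[OF Uc] colsU xs(2) by simp
    thus ?thesis using a colsU xs(1) by (intro bexI[of _ "vec r (\<lambda>i. a (col U i))"]) auto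
  qed
  define v where "v j = (SOME w. w \<in> carrier_vec r \<and> col B j = U *\<^sub>v w)" for j
  have v: "v j \<in> carrier_vec r \<and> col B j = U *\<^sub>v v j" if "j < n" for j
  proof -
    have "col B j \<in> set (cols B)" using that B by (simp add: cols_def)
    from span[OF this] have "\<exists>w. w \<in> carrier_vec r \<and> col B j = U *\<^sub>v w" by blast
    thus ?thesis unfolding v_def by (rule someI_ex)
  qed
  define V where "V = mat_of_cols r (map v [0..<n])"
  have Vc: "V \<in> carrier_mat r n" unfolding V_def using mat_of_cols_carrier(1)[of r "map v [0..<n]"] by simp
  have colV: "col V j = v j" if "j < n" for j unfolding V_def using that v by simp
  have BUV: "B = U * V"
  proof (rule mat_col_eqI)
    fix j assume "j < dim_col (U * V)"
    hence j: "j < n" using Vc by simp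
    show "col B j = col (U * V) j" using col_mult2[OF Uc Vc j] colV[OF j] v[OF j] by simp
  qed (use B Uc Vc in auto)
  define idx where "idx t = (SOME j. j < n \<and> xs ! t = col B j)" for t
  have idx: "idx t < n \<and> xs ! t = col B (idx t)" if "t < r" for t
  proof -
    have "xs ! t \<in> set (cols B)" using that lxs xs(1) SB nth_mem by blast
    hence "\<exists>j. j < n \<and> xs ! t = col B j" using B by (auto simp: cols_def)
    thus ?thesis unfolding idx_def by (rule someI_ex)
  qed
  define W :: "complex mat" where "W = mat_of_cols n (map (\<lambda>t. unit_vec n (idx t)) [0..<r])"
  have Wc: "W \<in> carrier_mat n r" unfolding W_def
    using mat_of_cols_carrier(1)[of n "map (\<lambda>t. unit_vec n (idx t)) [0..<r]"] by simp
  have UBW: "U = B * W"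
  proof (rule mat_col_eqI)
    fix t assume "t < dim_col (B * W)"
    hence t: "t < r" using Wc by simp
    have "col (B * W) t = B *\<^sub>v unit_vec n (idx t)"
      using col_mult2[OF B Wc t] t unfolding W_def by simp
    also have "\<dots> = col B (idx t)" using mat_unit_col[OF B] idx[OF t] by simp
    also have "\<dots> = col U t"
    proof -
      have "xs ! t \<in> carrier_vec n" using t lxs xsc nth_mem by blast
      hence "col U t = xs ! t" unfolding U_def using col_mat_of_cols[of t xs n] t lxs by simp
      thus ?thesis using idx[OF t] by simp
    qed
    finally show "col U t = col (B * W) t" by simp
  qed (use B Uc Wc in auto)
  show thesis by (rule that[OF Uc Vc BUV Wc UBW inj])
qed



lemma pow_comm:
  fixes P Q :: "'a :: semiring_1 mat"
  assumes P: "P \<in> carrier_mat n n" and Q: "Q \<in> carrier_mat n n" and c: "P * Q = Q * P"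
  shows "P ^\<^sub>m m * Q = Q * P ^\<^sub>m m"
proof (induction m)
  case 0
  then show ?case using P Q by simp
next
  case (Suc m)
  have Pm: "P ^\<^sub>m m \<in> carrier_mat n n" using P by simp
  have "P ^\<^sub>m Suc m * Q = P ^\<^sub>m m * (P * Q)" using assoc_mult_mat[OF Pm P Q] by simp
  also have "\<dots> = (P ^\<^sub>m m * Q) * P" using assoc_mult_mat[OF Pm Q P] c by simp
  also have "\<dots> = Q * P ^\<^sub>m Suc m" using Suc assoc_mult_mat[OF Q Pm P] by simp
  finally show ?case .
qed

lemma pow_mult_comm:
  fixes P Q :: "'a :: semiring_1 mat"
  assumes P: "P \<in> carrier_mat n n" and Q: "Q \<in> carrier_mat n n" and c: "P * Q = Q * P"
  shows "(P * Q) ^\<^sub>m m = P ^\<^sub>m m * Q ^\<^sub>m m"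
proof (induction m)
  case 0
  then show ?case using P Q by simp
next
  case (Suc m)
  have Pm: "P ^\<^sub>m m \<in> carrier_mat n n" "Q ^\<^sub>m m \<in> carrier_mat n n" using P Q by auto
  have "(P * Q) ^\<^sub>m Suc m = P ^\<^sub>m m * Q ^\<^sub>m m * (P * Q)" using Suc by simp
  also have "\<dots> = P ^\<^sub>m m * (Q ^\<^sub>m m * P) * Q"
    using assoc_mult_mat[OF Pm(1) Pm(2) P] assoc_mult_mat[OF Pm(1) Pm(2) mult_carrier_mat[OF P Q]]
      assoc_mult_mat[OF mult_carrier_mat[OF Pm(1) Pm(2)] P Q] assoc_mult_mat[OF Pm(1) mult_carrier_mat[OF Pm(2) P] Q]
    by simp
  also have "Q ^\<^sub>m m * P = P * Q ^\<^sub>m m" using pow_comm[OF Q P c[symmetric]] by simp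
  also have "P ^\<^sub>m m * (P * Q ^\<^sub>m m) * Q = P ^\<^sub>m Suc m * Q ^\<^sub>m Suc m"
    using assoc_mult_mat[OF Pm(1) P Pm(2)] assoc_mult_mat[OF mult_carrier_mat[OF Pm(1) P] Pm(2) Q] by simp
  finally show ?case .
qed

lemma pow_idem:
  fixes E :: "'a :: semiring_1 mat"
  assumes E: "E \<in> carrier_mat n n" and i: "E * E = E"
  shows "E ^\<^sub>m Suc m = E"
proof (induction m)
  case 0
  then show ?case using E by simp
next
  case (Suc m)
  then show ?case using i by simp
qed

lemma drazin_facts:
  fixes A X :: "'a :: comm_ring_1 mat"
  assumes A: "A \<in> carrier_mat n n" and X: "X \<in> carrier_mat n n"
    and d1: "A ^\<^sub>m (k+1) * X = A ^\<^sub>m k" and d2: "X * A * X = X" and d3: "A * X = X * A"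
  shows "X = A ^\<^sub>m (k+1) * X ^\<^sub>m (k+2)"
    and "A ^\<^sub>m (k+1) = X ^\<^sub>m (k+1) * (A ^\<^sub>m (k+1) * A ^\<^sub>m (k+1))"
proof -
  define E where "E = A * X"
  have Ec: "E \<in> carrier_mat n n" unfolding E_def using A X by simp
  have Ak: "A ^\<^sub>m k \<in> carrier_mat n n" "A ^\<^sub>m (k+1) \<in> carrier_mat n n" "X ^\<^sub>m (k+1) \<in> carrier_mat n n"
    using A X by auto
  have EE: "E * E = E"
  proof -
    have "E * E = A * (X * A * X)" unfolding E_def
      using assoc_mult_mat[OF A X mult_carrier_mat[OF A X]] assoc_mult_mat[OF X A X] by simp
    thus ?thesis using d2 unfolding E_def by simp
  qed
  have Epow: "E ^\<^sub>m (k+1) = E" using pow_idem[OF Ec EE, of k] by simp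
  have EX: "E * X = X"
  proof -
    have "E * X = X * A * X" unfolding E_def using d3 A X by simp
    thus ?thesis using d2 by simp
  qed
  have "X = E ^\<^sub>m (k+1) * X" using Epow EX by simp
  also have "E ^\<^sub>m (k+1) = A ^\<^sub>m (k+1) * X ^\<^sub>m (k+1)" unfolding E_def by (rule pow_mult_comm[OF A X d3])
  also have "A ^\<^sub>m (k+1) * X ^\<^sub>m (k+1) * X = A ^\<^sub>m (k+1) * X ^\<^sub>m (k+2)"
    using Ak X by simp
  finally show "X = A ^\<^sub>m (k+1) * X ^\<^sub>m (k+2)" .
  have AA: "A ^\<^sub>m (k+1) * A = A * A ^\<^sub>m (k+1)" by (rule pow_comm[OF A A refl])
  have BE: "A ^\<^sub>m (k+1) * E = A ^\<^sub>m (k+1)"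
  proof -
    have "A ^\<^sub>m (k+1) * E = (A ^\<^sub>m (k+1) * A) * X" unfolding E_def using A X Ak by simp
    also have "\<dots> = A * (A ^\<^sub>m (k+1) * X)" unfolding AA using A X Ak by simp
    also have "\<dots> = A * A ^\<^sub>m k" using d1 by simp
    also have "\<dots> = A ^\<^sub>m k * A" using pow_comm[OF A A refl, of k] by simp
    finally show ?thesis by simp
  qed
  have "E * A = A * (X * A)" unfolding E_def by (rule assoc_mult_mat[OF A X A])
  also have "\<dots> = A * E" unfolding E_def d3 ..
  finally have EA: "E * A = A * E" .
  have EB: "E * A ^\<^sub>m (k+1) = A ^\<^sub>m (k+1)"
    using pow_comm[OF A Ec EA[symmetric], of "k+1"] BE by simp
  have "A ^\<^sub>m (k+1) = E ^\<^sub>m (k+1) * A ^\<^sub>m (k+1)" using Epow EB by simp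
  also have "E = X * A" unfolding E_def using d3 .
  also have "(X * A) ^\<^sub>m (k+1) = X ^\<^sub>m (k+1) * A ^\<^sub>m (k+1)" by (rule pow_mult_comm[OF X A d3[symmetric]])
  also have "X ^\<^sub>m (k+1) * A ^\<^sub>m (k+1) * A ^\<^sub>m (k+1) = X ^\<^sub>m (k+1) * (A ^\<^sub>m (k+1) * A ^\<^sub>m (k+1))"
    using Ak by simp
  finally show "A ^\<^sub>m (k+1) = X ^\<^sub>m (k+1) * (A ^\<^sub>m (k+1) * A ^\<^sub>m (k+1))" .
qed



definition outer :: "'a :: comm_ring_1 vec \<Rightarrow> 'a vec \<Rightarrow> 'a mat" where
  "outer a b = mat (dim_vec a) (dim_vec b) (\<lambda>(p,q). a $ p * b $ q)"

lemma outer_carrier[simp]: "a \<in> carrier_vec m \<Longrightarrow> b \<in> carrier_vec l \<Longrightarrow> outer a b \<in> carrier_mat m l"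
  unfolding outer_def by auto

lemma outer_factor:
  assumes a: "a \<in> carrier_vec m" and b: "b \<in> carrier_vec l"
  shows "outer a b = mat_of_cols m [a] * mat_of_rows l [b]"
  by (rule eq_matI) (use a b in \<open>auto simp: outer_def mat_of_cols_def mat_of_rows_def scalar_prod_def row_def col_def\<close>)

lemma mult_outer:
  fixes A :: "'a :: comm_ring_1 mat"
  assumes A: "A \<in> carrier_mat m n" and b: "b \<in> carrier_vec n" and h: "h \<in> carrier_vec l"
  shows "A * outer b h = outer (A *\<^sub>v b) h"
proof (rule eq_matI)
  fix p q assume p: "p < dim_row (outer (A *\<^sub>v b) h)" and q: "q < dim_col (outer (A *\<^sub>v b) h)"
  hence p': "p < m" and q': "q < l" using A b h by (auto simp: outer_def)
  have "(A * outer b h) $$ (p, q) = (\<Sum>k = 0..<n. A $$ (p, k) * (b $ k * h $ q))"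
    using A b h p' q' by (simp add: outer_def scalar_prod_def)
  also have "\<dots> = (\<Sum>k = 0..<n. A $$ (p, k) * b $ k) * h $ q"
    by (simp add: sum_distrib_right mult.assoc)
  also have "\<dots> = outer (A *\<^sub>v b) h $$ (p, q)"
    using A b h p' q' by (simp add: outer_def scalar_prod_def)
  finally show "(A * outer b h) $$ (p, q) = outer (A *\<^sub>v b) h $$ (p, q)" .
qed (use A b h in \<open>auto simp: outer_def\<close>)

lemma outer_mult:
  fixes D :: "'a :: comm_ring_1 mat"
  assumes D: "D \<in> carrier_mat n l" and b: "b \<in> carrier_vec m" and d: "d \<in> carrier_vec n"
  shows "outer b d * D = outer b (transpose_mat D *\<^sub>v d)"
proof (rule eq_matI)
  fix p q assume p: "p < dim_row (outer b (transpose_mat D *\<^sub>v d))" and q: "q < dim_col (outer b (transpose_mat D *\<^sub>v d))"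
  hence p': "p < m" and q': "q < l" using D b d by (auto simp: outer_def)
  have "(outer b d * D) $$ (p, q) = (\<Sum>k = 0..<n. (b $ p * d $ k) * D $$ (k, q))"
    using D b d p' q' by (simp add: outer_def scalar_prod_def)
  also have "\<dots> = b $ p * (\<Sum>k = 0..<n. D $$ (k, q) * d $ k)"
    by (simp add: sum_distrib_left mult_ac)
  also have "\<dots> = outer b (transpose_mat D *\<^sub>v d) $$ (p, q)"
    using D b d p' q' by (simp add: outer_def scalar_prod_def)
  finally show "(outer b d * D) $$ (p, q) = outer b (transpose_mat D *\<^sub>v d) $$ (p, q)" .
qed (use D b d in \<open>auto simp: outer_def\<close>)

lemma det_one_outer:
  fixes b h :: "'a :: idom vec"
  assumes b: "b \<in> carrier_vec r" and h: "h \<in> carrier_vec r"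
  shows "det (1\<^sub>m r + outer b h) = 1 + h \<bullet> b"
proof -
  let ?U = "mat_of_cols r [b]" and ?V = "mat_of_rows r [h]"
  have U: "?U \<in> carrier_mat r 1" and V: "?V \<in> carrier_mat 1 r" by auto
  have o1: "(1::'a) \<cdot>\<^sub>m 1\<^sub>m r = 1\<^sub>m r" "(1::'a) \<cdot>\<^sub>m 1\<^sub>m 1 = 1\<^sub>m 1" by (rule eq_matI, auto)+
  from sylvester[OF U V, of 1]
  have "det (1\<^sub>m r + ?U * ?V) = det (1\<^sub>m 1 + ?V * ?U)" unfolding o1 by simp
  moreover have "?U * ?V = outer b h" using outer_factor[OF b h] by simp
  moreover have "det (1\<^sub>m 1 + ?V * ?U) = 1 + h \<bullet> b"
  proof -
    have "1\<^sub>m 1 + ?V * ?U \<in> carrier_mat 1 1" using U V by auto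
    hence "det (1\<^sub>m 1 + ?V * ?U) = (1\<^sub>m 1 + ?V * ?U) $$ (0,0)" by (rule det_single)
    also have "\<dots> = 1 + h \<bullet> b"
      using b h by (simp add: mat_of_cols_def mat_of_rows_def scalar_prod_def row_def col_def)
    finally show ?thesis .
  qed
  ultimately show ?thesis by simp
qed

lemma det_rank_one:
  fixes C :: "'a :: idom mat"
  assumes C: "C \<in> carrier_mat r r" and b: "b \<in> carrier_vec r" and h: "h \<in> carrier_vec r"
    and Cb: "C *\<^sub>v b = a"
  shows "det (C + outer a h) = det C * (1 + h \<bullet> b)"
proof -
  have O: "outer b h \<in> carrier_mat r r" using b h by simp
  have "C * (1\<^sub>m r + outer b h) = C * 1\<^sub>m r + C * outer b h"
    by (rule mult_add_distrib_mat[OF C one_carrier_mat O])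
  also have "\<dots> = C + outer a h" using C mult_outer[OF C b h] Cb by simp
  finally have eq: "C + outer a h = C * (1\<^sub>m r + outer b h)" by simp
  have S: "1\<^sub>m r + outer b h \<in> carrier_mat r r" using O by simp
  show ?thesis unfolding eq det_mult[OF C S] det_one_outer[OF b h] ..
qed

lemma replace_col_mult:
  fixes B :: "'a :: comm_ring_1 mat"
  assumes B: "B \<in> carrier_mat n n" and w: "w \<in> carrier_vec n" and i: "i < n"
  shows "replace_col B i (B *\<^sub>v w) = B * replace_col (1\<^sub>m n) i w"
proof (rule eq_matI)
  fix a b assume a: "a < dim_row (B * replace_col (1\<^sub>m n) i w)" and b: "b < dim_col (B * replace_col (1\<^sub>m n) i w)"
  hence a': "a < n" and b': "b < n" using B by (auto simp: replace_col_def)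
  have colR: "col (replace_col (1\<^sub>m n) i w) b = (if b = i then w else unit_vec n b)"
    using b' w by (intro eq_vecI) (auto simp: replace_col_def)
  show "replace_col B i (B *\<^sub>v w) $$ (a, b) = (B * replace_col (1\<^sub>m n) i w) $$ (a, b)"
    using B a' b' w colR by (auto simp: replace_col_def)
qed (use B in \<open>auto simp: replace_col_def\<close>)

lemma replace_col_one_outer:
  fixes c :: "'a :: comm_ring_1 vec"
  assumes c: "c \<in> carrier_vec n" and i: "i < n"
  shows "replace_col (1\<^sub>m n) i c = 1\<^sub>m n + outer (c - unit_vec n i) (unit_vec n i)"
  by (rule eq_matI) (use c i in \<open>auto simp: replace_col_def outer_def\<close>)

lemma transpose_unit_row:
  fixes U :: "'a :: comm_ring_1 mat"
  assumes U: "U \<in> carrier_mat n r" and i: "i < n"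
  shows "transpose_mat U *\<^sub>v unit_vec n i = row U i"
  by (rule eq_vecI) (use U i in auto)



lemma sub_replace_notin:
  fixes B :: "'a :: comm_ring_1 mat"
  assumes B: "B \<in> carrier_mat n n" and \<beta>: "\<beta> \<subseteq> {0..<n}" and i: "i \<notin> \<beta>"
  shows "submatrix (replace_col B i c) \<beta> \<beta> = submatrix (replace_col B i d) \<beta> \<beta>"
proof -
  have fin: "finite \<beta>" using \<beta> finite_subset by blast
  have cs: "{a. a < n \<and> a \<in> \<beta>} = \<beta>" using \<beta> by auto
  have pk: "pick \<beta> b < n \<and> pick \<beta> b \<noteq> i" if "b < card \<beta>" for b
    using pick_in_set[of b \<beta>] that \<beta> i by auto
  show ?thesis unfolding submatrix_def
    by (rule eq_matI) (use B \<beta> i pk cs in \<open>auto simp: replace_col_def\<close>)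
qed

lemma sub_replace_zero_det:
  fixes B :: "'a :: idom mat"
  assumes B: "B \<in> carrier_mat n n" and \<beta>: "\<beta> \<subseteq> {0..<n}" and i: "i \<in> \<beta>"
  shows "det (submatrix (replace_col B i (0\<^sub>v n)) \<beta> \<beta>) = 0"
proof -
  let ?M = "replace_col B i (0\<^sub>v n)"
  let ?m = "card \<beta>"
  have fin: "finite \<beta>" using \<beta> finite_subset by blast
  have Mc: "?M \<in> carrier_mat n n" using B by (simp add: replace_col_def)
  have cs: "{a. a < dim_row ?M \<and> a \<in> \<beta>} = \<beta>" "{a. a < dim_col ?M \<and> a \<in> \<beta>} = \<beta>"
    using \<beta> Mc by auto
  have Sc: "submatrix ?M \<beta> \<beta> \<in> carrier_mat ?m ?m"
    by (rule carrier_matI) (simp_all only: dim_submatrix cs)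
  define t where "t = card {a\<in>\<beta>. a < i}"
  have pt: "pick \<beta> t = i" unfolding t_def by (rule pick_card_in_set[OF i])
  have "{a\<in>\<beta>. a < i} \<subset> \<beta>" using i by auto
  hence tm: "t < ?m" unfolding t_def using psubset_card_mono[OF fin] by blast
  have "submatrix ?M \<beta> \<beta> *\<^sub>v unit_vec ?m t = 0\<^sub>v ?m"
  proof (rule eq_vecI)
    fix a assume "a < dim_vec (0\<^sub>v ?m :: 'a vec)"
    hence a: "a < ?m" by simp
    have "(submatrix ?M \<beta> \<beta> *\<^sub>v unit_vec ?m t) $ a = submatrix ?M \<beta> \<beta> $$ (a, t)"
      using Sc a tm by simp
    also have "\<dots> = ?M $$ (pick \<beta> a, pick \<beta> t)"
      by (rule submatrix_index) (simp_all only: cs a tm)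
    also have "\<dots> = 0"
    proof -
      have "pick \<beta> a < n" using pick_in_set[of a \<beta>] a \<beta> by auto
      thus ?thesis unfolding pt using i \<beta> B by (auto simp: replace_col_def)
    qed
    finally show "(submatrix ?M \<beta> \<beta> *\<^sub>v unit_vec ?m t) $ a = 0\<^sub>v ?m $ a" using a by simp
  qed (use Sc in simp)
  moreover have "unit_vec ?m t \<noteq> 0\<^sub>v ?m" using tm by simp
  ultimately show ?thesis using det_0_iff_vec_prod_zero[OF Sc]
    by (metis unit_vec_carrier)
qed

lemma beta_split:
  fixes B :: "'a :: idom mat"
  assumes B: "B \<in> carrier_mat n n"
  shows "(\<Sum>\<beta>\<in>{\<beta>\<in>Jrn r n. i \<in> \<beta>}. det (submatrix (replace_col B i c) \<beta> \<beta>))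
    = esum r n (replace_col B i c) - esum r n (replace_col B i (0\<^sub>v n))"
proof -
  let ?J1 = "{\<beta>\<in>Jrn r n. i \<in> \<beta>}" and ?J2 = "{\<beta>\<in>Jrn r n. i \<notin> \<beta>}"
  have J: "Jrn r n = ?J1 \<union> ?J2" by auto
  have f1: "finite ?J1" "finite ?J2" using Jrn_finite by auto
  have d: "?J1 \<inter> ?J2 = {}" by auto
  let ?f = "\<lambda>M \<beta>. det (submatrix M \<beta> \<beta>)"
  have e1: "esum r n (replace_col B i c) = sum (?f (replace_col B i c)) ?J1 + sum (?f (replace_col B i c)) ?J2"
    unfolding esum_def by (subst J, rule sum.union_disjoint[OF f1 d])
  have e2: "esum r n (replace_col B i (0\<^sub>v n)) = sum (?f (replace_col B i (0\<^sub>v n))) ?J1 + sum (?f (replace_col B i (0\<^sub>v n))) ?J2"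
    unfolding esum_def by (subst J, rule sum.union_disjoint[OF f1 d])
  have z: "sum (?f (replace_col B i (0\<^sub>v n))) ?J1 = 0"
    by (rule sum.neutral) (use sub_replace_zero_det[OF B] in \<open>auto simp: Jrn_def\<close>)
  have s: "sum (?f (replace_col B i (0\<^sub>v n))) ?J2 = sum (?f (replace_col B i c)) ?J2"
  proof (rule sum.cong[OF refl])
    fix \<beta> assume "\<beta> \<in> ?J2"
    hence b: "\<beta> \<subseteq> {0..<n}" "i \<notin> \<beta>" by (auto simp: Jrn_def)
    show "?f (replace_col B i (0\<^sub>v n)) \<beta> = ?f (replace_col B i c) \<beta>"
      using sub_replace_notin[OF B b, of "0\<^sub>v n" c] by simp
  qed
  show ?thesis unfolding e1 e2 z s by simp
qed

lemma VRU:
  fixes V U :: "'a :: comm_ring_1 mat"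
  assumes V: "V \<in> carrier_mat r n" and U: "U \<in> carrier_mat n r" and c: "c \<in> carrier_vec n" and e: "e \<in> carrier_vec n"
  shows "V * (1\<^sub>m n + outer c e) * U = V * U + outer (V *\<^sub>v c) (transpose_mat U *\<^sub>v e)"
proof -
  have O: "outer c e \<in> carrier_mat n n" using c e by simp
  have "V * (1\<^sub>m n + outer c e) = V * 1\<^sub>m n + V * outer c e"
    by (rule mult_add_distrib_mat[OF V one_carrier_mat O])
  also have "\<dots> = V + outer (V *\<^sub>v c) e" using V mult_outer[OF V c e] by simp
  finally have 1: "V * (1\<^sub>m n + outer c e) = V + outer (V *\<^sub>v c) e" .
  have Vc: "V *\<^sub>v c \<in> carrier_vec r" using V c by simp
  have O2: "outer (V *\<^sub>v c) e \<in> carrier_mat r n" using Vc e by simp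
  have "(V + outer (V *\<^sub>v c) e) * U = V * U + outer (V *\<^sub>v c) e * U"
    by (rule add_mult_distrib_mat[OF V O2 U])
  also have "outer (V *\<^sub>v c) e * U = outer (V *\<^sub>v c) (transpose_mat U *\<^sub>v e)"
    by (rule outer_mult[OF U Vc e])
  finally show ?thesis unfolding 1 .
qed



lemma mult_zero_vec_mat:
  fixes A :: "'a :: comm_ring_1 mat"
  assumes "A \<in> carrier_mat nr nc" shows "A *\<^sub>v 0\<^sub>v nc = 0\<^sub>v nr"
  by (rule eq_vecI) (use assms in auto)

theorem theorem3p5:
  fixes A X :: "complex mat" and y :: "complex vec" and n k r :: nat
  assumes "A \<in> carrier_mat n n"
    and "y \<in> carrier_vec n"
    and "mat_ind A = k"
    and "mrank (A ^\<^sub>m (k+1)) = r" and "mrank (A ^\<^sub>m k) = r"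
    and "is_drazin_inverse n A X"
    and "i < n"
  shows "(X *\<^sub>v y) $ i =
     (\<Sum>\<beta>\<in>{\<beta>\<in>Jrn r n. i \<in> \<beta>}.
         det (submatrix (replace_col (A ^\<^sub>m (k+1)) i (A ^\<^sub>m k *\<^sub>v y)) \<beta> \<beta>))
     / (\<Sum>\<beta>\<in>Jrn r n. det (submatrix (A ^\<^sub>m (k+1)) \<beta> \<beta>))"
proof -
  note A = assms(1) and y = assms(2) and i = assms(7)
  have Xc: "X \<in> carrier_mat n n" and d1: "A ^\<^sub>m (k+1) * X = A ^\<^sub>m k"
    and d2: "X * A * X = X" and d3: "A * X = X * A"
    using assms(6) assms(3) unfolding is_drazin_inverse_def by auto
  define B where "B = A ^\<^sub>m (k+1)"
  have Bc: "B \<in> carrier_mat n n" unfolding B_def by (rule pow_carrier_mat[OF A])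
  have Akc: "A ^\<^sub>m k \<in> carrier_mat n n" using A by simp
  have XB: "X = B * X ^\<^sub>m (k+2)" unfolding B_def by (rule drazin_facts(1)[OF A Xc d1 d2 d3])
  have BB: "B = X ^\<^sub>m (k+1) * (B * B)" unfolding B_def by (rule drazin_facts(2)[OF A Xc d1 d2 d3])
  have X1c: "X ^\<^sub>m (k+1) \<in> carrier_mat n n" and X2c: "X ^\<^sub>m (k+2) \<in> carrier_mat n n"
    using pow_carrier_mat[OF Xc] by blast+
  have dB: "dim_row B = n" using Bc by auto
  have rk: "vec_space.rank n B = r" using assms(4) unfolding mrank_def B_def[symmetric] dB .
  obtain U V W where Uc: "U \<in> carrier_mat n r" and Vc: "V \<in> carrier_mat r n" and BUV: "B = U * V"
    and Wc: "W \<in> carrier_mat n r" and UBW: "U = B * W"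
    and Uinj: "\<And>z. z \<in> carrier_vec r \<Longrightarrow> U *\<^sub>v z = 0\<^sub>v n \<Longrightarrow> z = 0\<^sub>v r"
    using full_rank_factor[OF Bc rk] by blast
  have rn: "r \<le> n" using vec_space.rank_le_nc[OF Bc] rk by simp
  define C where "C = V * U"
  have Cc: "C \<in> carrier_mat r r" unfolding C_def using Uc Vc by simp
  have Cinj: "z = 0\<^sub>v r" if z: "z \<in> carrier_vec r" "C *\<^sub>v z = 0\<^sub>v r" for z
  proof -
    have Wz: "W *\<^sub>v z \<in> carrier_vec n" using Wc z by simp
    have Uz: "U *\<^sub>v z = B *\<^sub>v (W *\<^sub>v z)" using UBW Bc Wc z by simp
    have "B *\<^sub>v (U *\<^sub>v z) = U *\<^sub>v (C *\<^sub>v z)"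
      unfolding C_def BUV using Uc Vc z by (simp add: assoc_mult_mat_vec)
    also have "\<dots> = 0\<^sub>v n" using z mult_zero_vec_mat[OF Uc] by simp
    finally have BBz: "B *\<^sub>v (B *\<^sub>v (W *\<^sub>v z)) = 0\<^sub>v n" using Uz by simp
    have "B *\<^sub>v (W *\<^sub>v z) = (X ^\<^sub>m (k+1) * (B * B)) *\<^sub>v (W *\<^sub>v z)" using BB by simp
    also have "\<dots> = X ^\<^sub>m (k+1) *\<^sub>v (B *\<^sub>v (B *\<^sub>v (W *\<^sub>v z)))"
      using assoc_mult_mat_vec[OF X1c mult_carrier_mat[OF Bc Bc] Wz] assoc_mult_mat_vec[OF Bc Bc Wz]
      by (simp only:)
    also have "\<dots> = 0\<^sub>v n" unfolding BBz using mult_zero_vec_mat[OF X1c] by simp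
    finally have "U *\<^sub>v z = 0\<^sub>v n" using Uz by simp
    thus ?thesis using Uinj z(1) by blast
  qed
  have detC: "det C \<noteq> 0"
  proof
    assume "det C = 0"
    then obtain v where "v \<in> carrier_vec r" "v \<noteq> 0\<^sub>v r" "C *\<^sub>v v = 0\<^sub>v r"
      using det_0_iff_vec_prod_zero[OF Cc] by blast
    thus False using Cinj by blast
  qed
  have den: "(\<Sum>\<beta>\<in>Jrn r n. det (submatrix (A ^\<^sub>m (k+1)) \<beta> \<beta>)) = det C"
    using esum_factor[OF Uc Vc rn] unfolding esum_def C_def B_def[symmetric] BUV by simp
  define xh where "xh = X *\<^sub>v y"
  have xhc: "xh \<in> carrier_vec n" unfolding xh_def using Xc y by simp
  define w where "w = X ^\<^sub>m (k+2) *\<^sub>v y"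
  have wc: "w \<in> carrier_vec n" unfolding w_def using X2c y by simp
  define s where "s = V *\<^sub>v w"
  have sc: "s \<in> carrier_vec r" unfolding s_def using Vc wc by simp
  have xhs: "xh = U *\<^sub>v s"
  proof -
    have "xh = (B * X ^\<^sub>m (k+2)) *\<^sub>v y" unfolding xh_def using XB by simp
    also have "\<dots> = B *\<^sub>v w" unfolding w_def using Bc X2c y by (simp add: assoc_mult_mat_vec)
    also have "\<dots> = U *\<^sub>v s" unfolding BUV s_def using Uc Vc wc by (simp add: assoc_mult_mat_vec)
    finally show ?thesis .
  qed
  have f: "A ^\<^sub>m k *\<^sub>v y = B *\<^sub>v xh"
  proof -
    have "B *\<^sub>v xh = (B * X) *\<^sub>v y" unfolding xh_def using assoc_mult_mat_vec[OF Bc Xc y] by simp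
    also have "B * X = A ^\<^sub>m k" unfolding B_def by (rule d1)
    finally show ?thesis by simp
  qed
  define e :: "complex vec" where "e = unit_vec n i"
  have ec: "e \<in> carrier_vec n" unfolding e_def by simp
  define h where "h = transpose_mat U *\<^sub>v e"
  have hrow: "h = row U i" unfolding h_def e_def by (rule transpose_unit_row[OF Uc i])
  have hc: "h \<in> carrier_vec r" unfolding hrow
    by (rule carrier_vecI) (simp only: index_row(2) carrier_matD(2)[OF Uc])
  define a0 where "a0 = V *\<^sub>v (0\<^sub>v n - e)"
  define a1 where "a1 = V *\<^sub>v (xh - e)"
  have M1: "esum r n (replace_col B i (A ^\<^sub>m k *\<^sub>v y)) = det (C + outer a1 h)"
  proof -
    have "replace_col B i (A ^\<^sub>m k *\<^sub>v y) = B * replace_col (1\<^sub>m n) i xh"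
      unfolding f by (rule replace_col_mult[OF Bc xhc i])
    also have "replace_col (1\<^sub>m n) i xh = 1\<^sub>m n + outer (xh - e) e"
      unfolding e_def by (rule replace_col_one_outer[OF xhc i])
    moreover have Oc: "1\<^sub>m n + outer (xh - e) e \<in> carrier_mat n n" using xhc ec by simp
    ultimately have eq: "replace_col B i (A ^\<^sub>m k *\<^sub>v y) = U * (V * (1\<^sub>m n + outer (xh - e) e))"
      unfolding BUV using assoc_mult_mat[OF Uc Vc Oc] by simp
    have Rc: "V * (1\<^sub>m n + outer (xh - e) e) \<in> carrier_mat r n" using Vc xhc ec by simp
    have "esum r n (replace_col B i (A ^\<^sub>m k *\<^sub>v y)) = det (V * (1\<^sub>m n + outer (xh - e) e) * U)"
      unfolding eq by (rule esum_factor[OF Uc Rc rn])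
    also have "\<dots> = det (C + outer a1 h)"
    proof -
      have xec: "xh - e \<in> carrier_vec n" using xhc ec by simp
      show ?thesis unfolding VRU[OF Vc Uc xec ec] C_def a1_def h_def ..
    qed
    finally show ?thesis .
  qed
  have M0: "esum r n (replace_col B i (0\<^sub>v n)) = det (C + outer a0 h)"
  proof -
    have z: "0\<^sub>v n = B *\<^sub>v 0\<^sub>v n" using mult_zero_vec_mat[OF Bc] by simp
    have "replace_col B i (0\<^sub>v n) = B * replace_col (1\<^sub>m n) i (0\<^sub>v n)"
      by (subst (1) z, rule replace_col_mult[OF Bc _ i]) simp
    also have "replace_col (1\<^sub>m n) i (0\<^sub>v n) = 1\<^sub>m n + outer (0\<^sub>v n - e) e"
      unfolding e_def by (rule replace_col_one_outer[OF _ i]) simp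
    moreover have Oc: "1\<^sub>m n + outer (0\<^sub>v n - e) e \<in> carrier_mat n n" using ec by simp
    ultimately have eq: "replace_col B i (0\<^sub>v n) = U * (V * (1\<^sub>m n + outer (0\<^sub>v n - e) e))"
      unfolding BUV using assoc_mult_mat[OF Uc Vc Oc] by simp
    have Rc: "V * (1\<^sub>m n + outer (0\<^sub>v n - e) e) \<in> carrier_mat r n" using Vc ec by simp
    have "esum r n (replace_col B i (0\<^sub>v n)) = det (V * (1\<^sub>m n + outer (0\<^sub>v n - e) e) * U)"
      unfolding eq by (rule esum_factor[OF Uc Rc rn])
    also have "\<dots> = det (C + outer a0 h)"
    proof -
      have xec: "0\<^sub>v n - e \<in> carrier_vec n" using ec by simp
      show ?thesis unfolding VRU[OF Vc Uc xec ec] C_def a0_def h_def ..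
    qed
    finally show ?thesis .
  qed
  define b0 where "b0 = (1 / det C) \<cdot>\<^sub>v (adj_mat C *\<^sub>v a0)"
  have a0c: "a0 \<in> carrier_vec r" unfolding a0_def using Vc ec by simp
  have adj: "adj_mat C \<in> carrier_mat r r" "C * adj_mat C = det C \<cdot>\<^sub>m 1\<^sub>m r" using adj_mat[OF Cc] by auto
  have b0c: "b0 \<in> carrier_vec r" unfolding b0_def using adj a0c by simp
  have Cb0: "C *\<^sub>v b0 = a0"
  proof -
    have aa: "adj_mat C *\<^sub>v a0 \<in> carrier_vec r" using adj a0c by simp
    have "C *\<^sub>v b0 = (1 / det C) \<cdot>\<^sub>v (C *\<^sub>v (adj_mat C *\<^sub>v a0))"
      unfolding b0_def by (rule mult_mat_vec[OF Cc aa])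
    also have "C *\<^sub>v (adj_mat C *\<^sub>v a0) = (C * adj_mat C) *\<^sub>v a0"
      using assoc_mult_mat_vec[OF Cc adj(1) a0c] by simp
    also have "(1 / det C) \<cdot>\<^sub>v ((C * adj_mat C) *\<^sub>v a0) = a0" unfolding adj(2)
    proof (rule eq_vecI)
      fix j assume "j < dim_vec a0"
      hence j: "j < r" using a0c by simp
      have "(\<Sum>ia = 0..<r. det C * (if ia = j then 1 else 0) * a0 $ ia) =
            (\<Sum>ia = 0..<r. if ia = j then det C * a0 $ ia else 0)" by (intro sum.cong) auto
      also have "\<dots> = det C * a0 $ j" using j by (simp add: sum.delta)
      finally have "(\<Sum>ia = 0..<r. det C * (if ia = j then 1 else 0) * a0 $ ia) = det C * a0 $ j" .
      thus "(1 / det C \<cdot>\<^sub>v (det C \<cdot>\<^sub>m 1\<^sub>m r *\<^sub>v a0)) $ j = a0 $ j"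
        using j a0c detC by (simp add: scalar_prod_def)
    qed (use a0c in simp)
    finally show ?thesis .
  qed
  define b1 where "b1 = b0 + s"
  have b1c: "b1 \<in> carrier_vec r" unfolding b1_def using b0c sc by simp
  have Cb1: "C *\<^sub>v b1 = a1"
  proof -
    have "C *\<^sub>v b1 = a0 + C *\<^sub>v s" unfolding b1_def using Cc b0c sc Cb0 by (simp add: mult_add_distrib_mat_vec)
    also have "C *\<^sub>v s = V *\<^sub>v xh" unfolding C_def xhs using Vc Uc sc by (simp add: assoc_mult_mat_vec)
    also have "a0 + V *\<^sub>v xh = V *\<^sub>v ((0\<^sub>v n - e) + xh)" unfolding a0_def
      using Vc ec xhc by (simp add: mult_add_distrib_mat_vec)
    also have "(0\<^sub>v n - e) + xh = xh - e" using ec xhc by (intro eq_vecI) auto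
    finally show ?thesis unfolding a1_def .
  qed
  have num: "(\<Sum>\<beta>\<in>{\<beta>\<in>Jrn r n. i \<in> \<beta>}.
         det (submatrix (replace_col (A ^\<^sub>m (k+1)) i (A ^\<^sub>m k *\<^sub>v y)) \<beta> \<beta>)) = det C * xh $ i"
  proof -
    have "(\<Sum>\<beta>\<in>{\<beta>\<in>Jrn r n. i \<in> \<beta>}.
         det (submatrix (replace_col (A ^\<^sub>m (k+1)) i (A ^\<^sub>m k *\<^sub>v y)) \<beta> \<beta>))
      = det (C + outer a1 h) - det (C + outer a0 h)"
      unfolding B_def[symmetric] beta_split[OF Bc] M1 M0 ..
    also have "\<dots> = det C * (1 + h \<bullet> b1) - det C * (1 + h \<bullet> b0)"
      using det_rank_one[OF Cc b1c hc Cb1] det_rank_one[OF Cc b0c hc Cb0] by simp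
    also have "h \<bullet> b1 = h \<bullet> b0 + h \<bullet> s" unfolding b1_def using hc b0c sc by (simp add: scalar_prod_add_distrib)
    also have "h \<bullet> s = xh $ i" unfolding hrow xhs using Uc sc i by simp
    finally show ?thesis by (simp add: algebra_simps)
  qed
  show ?thesis unfolding num den xh_def[symmetric] using detC by simp
qed


end
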